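(* Let $\lambda\in\mathbb C$ with $|\lambda|<1$ and let $k\ge2$ be an integer. If $\nu_{\lambda^k}$ is absolutely continuous with density in $L^2(\mathbb R^2)$, then $\nu_\lambda$ is absolutely continuous with a continuous density.
   Context: For $|\mu|<1$, $\nu_\mu$ is the distribution on $\mathbb C\cong\mathbb R^2$ of the random series $\sum_{n\ge0}\pm\mu^n$ with signs chosen independently, each with probability $1/2$. *)

theory Defs
  imports "HOL-Probability.Probability"
begin

definition sign_series :: "complex \<Rightarrow> (nat \<Rightarrow> bool) \<Rightarrow> complex" where
  "sign_series \<mu> \<omega> = (\<Sum>n. (if \<omega> n then 1 else -1) * \<mu> ^ n)"

definition coin_space :: "(nat \<Rightarrow> bool) measure" where
  "coin_space = PiM UNIV (\<lambda>_. measure_pmf (bernoulli_pmf (1/2)))"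

text \<open>nu \<mu>: the distribution on the complex plane (= R^2) of the random series.\<close>

definition nu :: "complex \<Rightarrow> complex measure" where
  "nu \<mu> = distr coin_space borel (sign_series \<mu>)"

end

theory Submission
  imports Defs
begin

lemma Complex_meas[measurable]: "(\<lambda>(x,y). Complex x y) \<in> borel_measurable (lborel \<Otimes>\<^sub>M lborel)"
proof -
  have "(\<lambda>(x,y). Complex x y) = (\<lambda>p. complex_of_real (fst p) + \<i> * complex_of_real (snd p))"
    by (auto simp: Complex_eq fun_eq_iff)
  then show ?thesis by simp
qed
lemma lborel_complex: "distr (lborel \<Otimes>\<^sub>M lborel) borel (\<lambda>(x,y). Complex x y) = (lborel :: complex measure)"
proof (rule lborel_eqI[symmetric])
  fix l u :: complex
  assume le: "\<And>b. b \<in> Basis \<Longrightarrow> l \<bullet> b \<le> u \<bullet> b"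
  have eq: "(\<lambda>(x,y). Complex x y) -` box l u \<inter> space (lborel \<Otimes>\<^sub>M lborel) = {Re l<..<Re u} \<times> {Im l<..<Im u}"
    by (auto simp: mem_box Basis_complex_def space_pair_measure)
  have "emeasure (distr (lborel \<Otimes>\<^sub>M lborel) borel (\<lambda>(x,y). Complex x y)) (box l u)
      = emeasure (lborel \<Otimes>\<^sub>M lborel) ({Re l<..<Re u} \<times> {Im l<..<Im u})"
    by (subst emeasure_distr) (auto simp: eq)
  also have "\<dots> = ennreal (Re u - Re l) * ennreal (Im u - Im l)"
    using le[of 1] le[of \<i>] by (simp add: lborel.emeasure_pair_measure_Times)
  also have "\<dots> = (\<Prod>b\<in>Basis. (u - l) \<bullet> b)"
    using le[of 1] le[of \<i>] by (simp add: Basis_complex_def ennreal_mult)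
  finally show "emeasure (distr (lborel \<Otimes>\<^sub>M lborel) borel (\<lambda>(x,y). Complex x y)) (box l u) = (\<Prod>b\<in>Basis. (u - l) \<bullet> b)" .
qed simp

lemma nn_integral_complex:
  fixes h :: "complex \<Rightarrow> ennreal"
  assumes [measurable]: "h \<in> borel_measurable borel"
  shows "(\<integral>\<^sup>+z. h z \<partial>lborel) = (\<integral>\<^sup>+y. \<integral>\<^sup>+x. h (Complex x y) \<partial>lborel \<partial>lborel)"
proof -
  have "(\<integral>\<^sup>+z. h z \<partial>lborel) = (\<integral>\<^sup>+z. h z \<partial>distr (lborel \<Otimes>\<^sub>M lborel) borel (\<lambda>(x,y). Complex x y))"
    by (simp add: lborel_complex)
  also have "\<dots> = (\<integral>\<^sup>+p. h (case p of (x,y) \<Rightarrow> Complex x y) \<partial>(lborel \<Otimes>\<^sub>M lborel))"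
    by (rule nn_integral_distr) auto
  also have "\<dots> = (\<integral>\<^sup>+y. \<integral>\<^sup>+x. h (Complex x y) \<partial>lborel \<partial>lborel)"
    by (subst lborel_pair.nn_integral_snd[symmetric]) (auto simp: case_prod_beta')
  finally show ?thesis .
qed
lemma nn_integral_complex_mult_Re:
  fixes h :: "complex \<Rightarrow> ennreal"
  assumes hm[measurable]: "h \<in> borel_measurable borel" and a0: "Re c \<noteq> 0"
  shows "(\<integral>\<^sup>+z. h z \<partial>lborel) = ennreal ((cmod c)^2) * (\<integral>\<^sup>+z. h (c * z) \<partial>lborel)"
proof -
  define a where "a = Re c"
  define b where "b = Im c"
  define d where "d = (a^2 + b^2) / a"
  have a: "a \<noteq> 0" using a0 by (simp add: a_def)
  have d: "d \<noteq> 0" using a by (simp add: d_def add_nonneg_eq_0_iff)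
  have ad: "\<bar>a\<bar> * \<bar>d\<bar> = (cmod c)^2"
  proof -
    have "\<bar>a\<bar> * \<bar>d\<bar> = a^2 + b^2"
      using a by (simp add: d_def abs_mult[symmetric] abs_of_nonneg)
    also have "\<dots> = (cmod c)^2" by (simp add: cmod_power2 a_def b_def)
    finally show ?thesis .
  qed
  have hc[measurable]: "(\<lambda>z. h (c * z)) \<in> borel_measurable borel" by measurable
  have S1: "(\<integral>\<^sup>+z. h (c * z) \<partial>lborel) = (\<integral>\<^sup>+y. \<integral>\<^sup>+x. h (Complex (a*x - b*y) (b*x + a*y)) \<partial>lborel \<partial>lborel)"
  proof -
    have "\<And>x y. c * Complex x y = Complex (a*x - b*y) (b*x + a*y)"
      by (simp add: a_def b_def complex_eq_iff)
    then show ?thesis using nn_integral_complex[OF hc] by simp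
  qed
  have S2: "(\<integral>\<^sup>+x. h (Complex (a*x - b*y) (b*x + a*y)) \<partial>lborel)
       = ennreal (1/\<bar>a\<bar>) * (\<integral>\<^sup>+x. h (Complex x (b/a*x + d*y)) \<partial>lborel)" for y
  proof -
    have m: "(\<lambda>x. h (Complex (a*x - b*y) (b*x + a*y))) \<in> borel_measurable borel"
    proof -
      have "(\<lambda>x. Complex (a*x - b*y) (b*x + a*y)) = (\<lambda>x. complex_of_real (a*x - b*y) + \<i> * complex_of_real (b*x + a*y))"
        by (auto simp: Complex_eq fun_eq_iff)
      then show ?thesis by simp
    qed
    have "(\<integral>\<^sup>+x. h (Complex (a*x - b*y) (b*x + a*y)) \<partial>lborel)
      = ennreal \<bar>1/a\<bar> * (\<integral>\<^sup>+x. h (Complex (a*(b*y/a + 1/a*x) - b*y) (b*(b*y/a + 1/a*x) + a*y)) \<partial>lborel)"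
      using nn_integral_real_affine[OF m, of "1/a" "b*y/a"] a by simp
    also have "(\<lambda>x. h (Complex (a*(b*y/a + 1/a*x) - b*y) (b*(b*y/a + 1/a*x) + a*y))) = (\<lambda>x. h (Complex x (b/a*x + d*y)))"
      using a by (auto simp: fun_eq_iff d_def field_simps power2_eq_square)
    finally show ?thesis by simp
  qed
  have S3: "(\<integral>\<^sup>+y. h (Complex x (b/a*x + d*y)) \<partial>lborel) = ennreal (1/\<bar>d\<bar>) * (\<integral>\<^sup>+v. h (Complex x v) \<partial>lborel)" for x
  proof -
    have m: "(\<lambda>v. h (Complex x v)) \<in> borel_measurable borel"
    proof -
      have "(\<lambda>v. Complex x v) = (\<lambda>v. complex_of_real x + \<i> * complex_of_real v)"
        by (auto simp: Complex_eq fun_eq_iff)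
      then show ?thesis by simp
    qed
    have "(\<integral>\<^sup>+v. h (Complex x v) \<partial>lborel) = ennreal \<bar>d\<bar> * (\<integral>\<^sup>+y. h (Complex x (b/a*x + d*y)) \<partial>lborel)"
      using nn_integral_real_affine[OF m d, of "b/a*x"] by simp
    moreover have e: "ennreal (1/\<bar>d\<bar>) * ennreal \<bar>d\<bar> = 1"
      using d by (simp flip: ennreal_mult)
    ultimately show ?thesis
      by (simp add: mult.assoc[symmetric] e)
  qed
  have mH: "(\<lambda>(x, y). h (Complex x y)) \<in> borel_measurable (lborel \<Otimes>\<^sub>M lborel)"
    by measurable
  have mH2: "(\<lambda>(y, x). h (Complex x (b/a*x + d*y))) \<in> borel_measurable (lborel \<Otimes>\<^sub>M lborel)"
  proof -
    have "(\<lambda>(y, x). Complex x (b/a*x + d*y)) = (\<lambda>p. complex_of_real (snd p) + \<i> * complex_of_real (b/a * snd p + d*fst p))"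
      by (auto simp: Complex_eq fun_eq_iff)
    then have "(\<lambda>(y, x). Complex x (b/a*x + d*y)) \<in> borel_measurable (lborel \<Otimes>\<^sub>M lborel)" by simp
    then show ?thesis by (simp add: case_prod_beta')
  qed
  have "(\<integral>\<^sup>+z. h (c * z) \<partial>lborel) = ennreal (1/\<bar>a\<bar>) * (\<integral>\<^sup>+y. \<integral>\<^sup>+x. h (Complex x (b/a*x + d*y)) \<partial>lborel \<partial>lborel)"
    unfolding S1 S2 by (rule nn_integral_cmult) measurable
  also have "(\<integral>\<^sup>+y. \<integral>\<^sup>+x. h (Complex x (b/a*x + d*y)) \<partial>lborel \<partial>lborel) = (\<integral>\<^sup>+x. \<integral>\<^sup>+y. h (Complex x (b/a*x + d*y)) \<partial>lborel \<partial>lborel)"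
    using lborel_pair.Fubini'[OF mH2] by simp
  also have "\<dots> = ennreal (1/\<bar>d\<bar>) * (\<integral>\<^sup>+x. \<integral>\<^sup>+v. h (Complex x v) \<partial>lborel \<partial>lborel)"
    unfolding S3 by (rule nn_integral_cmult) measurable
  also have "(\<integral>\<^sup>+x. \<integral>\<^sup>+v. h (Complex x v) \<partial>lborel \<partial>lborel) = (\<integral>\<^sup>+z. h z \<partial>lborel)"
    using lborel_pair.Fubini'[OF mH] nn_integral_complex[OF hm] by simp
  finally have "(\<integral>\<^sup>+z. h (c * z) \<partial>lborel) = ennreal (1/((cmod c)^2)) * (\<integral>\<^sup>+z. h z \<partial>lborel)"
    using a d ad by (simp add: ennreal_mult'[symmetric] mult.assoc[symmetric])
  moreover have "c \<noteq> 0" using a0 by auto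
  ultimately show ?thesis
    by (simp add: mult.assoc[symmetric] ennreal_mult'[symmetric] )
qed
lemma nn_integral_complex_mult:
  fixes h :: "complex \<Rightarrow> ennreal"
  assumes hm[measurable]: "h \<in> borel_measurable borel" and c0: "c \<noteq> 0"
  shows "(\<integral>\<^sup>+z. h z \<partial>lborel) = ennreal ((cmod c)^2) * (\<integral>\<^sup>+z. h (c * z) \<partial>lborel)"
proof (cases "Re c = 0")
  case False
  then show ?thesis using nn_integral_complex_mult_Re[OF hm] by simp
next
  case True
  define c1 where "c1 = 1 + \<i>"
  define c2 where "c2 = c / c1"
  have "Re c2 \<noteq> 0" using True c0 by (simp add: c2_def c1_def complex_eq_iff Re_divide)
  have r1: "Re c1 \<noteq> 0" by (simp add: c1_def)
  have m2[measurable]: "(\<lambda>z. h (c1 * z)) \<in> borel_measurable borel" by measurable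
  have "(\<integral>\<^sup>+z. h z \<partial>lborel) = ennreal ((cmod c1)^2) * (\<integral>\<^sup>+z. h (c1 * z) \<partial>lborel)"
    using nn_integral_complex_mult_Re[OF hm r1] .
  also have "(\<integral>\<^sup>+z. h (c1 * z) \<partial>lborel) = ennreal ((cmod c2)^2) * (\<integral>\<^sup>+z. h (c1 * (c2 * z)) \<partial>lborel)"
    using nn_integral_complex_mult_Re[OF m2 \<open>Re c2 \<noteq> 0\<close>] .
  also have "(\<lambda>z. h (c1 * (c2 * z))) = (\<lambda>z. h (c * z))"
  proof -
    have "1 + \<i> \<noteq> 0" by (simp add: complex_eq_iff)
    then show ?thesis by (simp add: c2_def c1_def mult.assoc[symmetric])
  qed
  also have "ennreal ((cmod c1)^2) * (ennreal ((cmod c2)^2) * (\<integral>\<^sup>+z. h (c * z) \<partial>lborel))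
     = ennreal ((cmod c)^2) * (\<integral>\<^sup>+z. h (c * z) \<partial>lborel)"
  proof -
    have "1 + \<i> \<noteq> 0" by (simp add: complex_eq_iff)
    then have "(cmod c1)^2 * (cmod c2)^2 = (cmod c)^2"
      by (simp add: c2_def c1_def norm_divide power_divide)
    then show ?thesis by (simp add: mult.assoc[symmetric] ennreal_mult'[symmetric])
  qed
  finally show ?thesis .
qed

lemma nn_integral_complex_affine:
  fixes h :: "complex \<Rightarrow> ennreal"
  assumes hm[measurable]: "h \<in> borel_measurable borel" and c0: "c \<noteq> 0"
  shows "(\<integral>\<^sup>+z. h z \<partial>lborel) = ennreal ((cmod c)^2) * (\<integral>\<^sup>+z. h (w - c * z) \<partial>lborel)"
proof -
  have "(\<integral>\<^sup>+z. h z \<partial>lborel) = (\<integral>\<^sup>+z. h z \<partial>distr lborel borel ((+) w))"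
    by (simp add: lborel_distr_plus)
  also have "\<dots> = (\<integral>\<^sup>+z. h (w + z) \<partial>lborel)"
    by (rule nn_integral_distr) auto
  also have "\<dots> = ennreal ((cmod (-c))^2) * (\<integral>\<^sup>+z. h (w + (-c) * z) \<partial>lborel)"
    by (rule nn_integral_complex_mult) (use c0 in auto)
  finally show ?thesis by simp
qed


lemma open_shift_small:
  fixes U :: "complex set"
  assumes U: "open U" and fin: "emeasure lborel U < \<infinity>" and e: "e > 0"
  shows "\<exists>d>0. \<forall>a. cmod a < d \<longrightarrow> (\<integral>\<^sup>+x. ennreal (indicator U x * (1 - indicator U (x + a))) \<partial>lborel) < ennreal e"
proof -
  have Um[measurable]: "U \<in> sets borel" using U by auto
  have intU: "integrable lborel (indicator U :: complex \<Rightarrow> real)"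
    using fin by (simp add: integrable_indicator_iff)
  define F where "F a = (LINT x|lborel. indicator U x * (1 - indicator U (x + a)) :: real)" for a :: complex
  have int: "integrable lborel (\<lambda>x. indicator U x * (1 - indicator U (x + a)) :: real)" for a
    by (rule Bochner_Integration.integrable_bound[OF intU]) (auto split: split_indicator)
  have nn: "(\<integral>\<^sup>+x. ennreal (indicator U x * (1 - indicator U (x + a))) \<partial>lborel) = ennreal (F a)" for a
    unfolding F_def by (rule nn_integral_eq_integral[OF int]) (auto split: split_indicator)
  have "(F \<longlongrightarrow> 0) (at 0)"
    unfolding tendsto_at_iff_sequentially comp_def
  proof (intro allI impI)
    fix X :: "nat \<Rightarrow> complex" assume X: "X \<longlonglongrightarrow> 0"
    have "(\<lambda>i. F (X i)) \<longlonglongrightarrow> (LINT (x::complex)|lborel. (0::real))"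
      unfolding F_def
    proof (rule Bochner_Integration.integral_dominated_convergence[OF _ _ intU])
      show "AE x in lborel. (\<lambda>i. indicator U x * (1 - indicator U (x + X i)) :: real) \<longlonglongrightarrow> 0"
      proof (rule AE_I2)
        fix x
        show "(\<lambda>i. indicator U x * (1 - indicator U (x + X i)) :: real) \<longlonglongrightarrow> 0"
        proof (cases "x \<in> U")
          case True
          then obtain r where r: "r > 0" "ball x r \<subseteq> U" using U open_contains_ball by blast
          have "eventually (\<lambda>i. cmod (X i) < r) sequentially"
            using X r(1) by (auto simp: tendsto_iff dist_norm)
          then have "eventually (\<lambda>i. (indicator U x * (1 - indicator U (x + X i)) :: real) = 0) sequentially"
          proof eventually_elim
            case (elim i)
            then have "x + X i \<in> U" using r(2) by (auto simp: dist_norm)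
            then show ?case by simp
          qed
          then show ?thesis by (rule tendsto_eventually)
        qed simp
      qed
    qed (use intU in \<open>auto split: split_indicator\<close>)
    then show "(\<lambda>i. F (X i)) \<longlonglongrightarrow> 0" by simp
  qed
  then have "eventually (\<lambda>a. dist (F a) 0 < e) (at 0)"
    using e by (auto simp: tendsto_iff)
  then obtain d where d: "d > 0" "\<And>a. a \<noteq> 0 \<Longrightarrow> dist a 0 < d \<Longrightarrow> dist (F a) 0 < e"
    by (auto simp: eventually_at)
  show ?thesis
  proof (intro exI[of _ d] conjI allI impI)
    fix a :: complex assume a: "cmod a < d"
    have "F a < e"
    proof (cases "a = 0")
      case True
      have "(\<lambda>x. indicator U x * (1 - indicator U (x + a)) :: real) = (\<lambda>x. 0)"
        unfolding True by (auto simp: fun_eq_iff split: split_indicator)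
      then have "F a = 0" unfolding F_def by simp
      then show ?thesis using e by simp
    next
      case False
      then show ?thesis using d(2)[of a] a by (auto simp: dist_norm)
    qed
    moreover have "F a \<ge> 0" unfolding F_def by (rule integral_nonneg_AE) (auto split: split_indicator)
    ultimately show "(\<integral>\<^sup>+x. ennreal (indicator U x * (1 - indicator U (x + a))) \<partial>lborel) < ennreal e"
      unfolding nn using e by (simp add: ennreal_less_iff)
  qed (use d in auto)
qed
lemma nn_integral_translate:
  fixes h :: "complex \<Rightarrow> ennreal"
  assumes hm[measurable]: "h \<in> borel_measurable borel"
  shows "(\<integral>\<^sup>+z. h z \<partial>lborel) = (\<integral>\<^sup>+z. h (z + a) \<partial>lborel)"
proof -
  have "(\<integral>\<^sup>+z. h z \<partial>lborel) = (\<integral>\<^sup>+z. h z \<partial>distr lborel borel ((+) a))"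
    by (simp add: lborel_distr_plus)
  also have "\<dots> = (\<integral>\<^sup>+z. h (a + z) \<partial>lborel)"
    by (rule nn_integral_distr) auto
  finally show ?thesis by (simp add: add.commute)
qed

lemma set_shift_small:
  fixes A :: "complex set"
  assumes Am[measurable]: "A \<in> sets borel" and fin: "emeasure lborel A < \<infinity>" and e: "e > 0"
  shows "\<exists>d>0. \<forall>a. cmod a < d \<longrightarrow> (\<integral>\<^sup>+x. ennreal \<bar>indicator A (x + a) - indicator A x\<bar> \<partial>lborel) < ennreal e"
proof -
  have e4: "e/4 > 0" using e by simp
  obtain U where U: "open U" "A \<subseteq> U" "emeasure lborel (U - A) < e/4"
    using outer_regular_lborel[OF Am e4] by blast
  have Um[measurable]: "U \<in> sets borel" using U(1) by auto
  have "emeasure lborel U \<le> emeasure lborel A + emeasure lborel (U - A)"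
  proof -
    have eqU: "A \<union> (U - A) = U" using U(2) by auto
    have "emeasure lborel (A \<union> (U - A)) \<le> emeasure lborel A + emeasure lborel (U - A)"
      by (rule emeasure_subadditive) auto
    then show ?thesis by (simp only: eqU)
  qed
  also have "\<dots> < \<infinity>"
  proof -
    have "emeasure lborel (U - A) < \<infinity>" using U(3) by (metis ennreal_less_top order.strict_trans infinity_ennreal_def)
    then show ?thesis using fin by (simp add: ennreal_add_less_top)
  qed
  finally have Ufin: "emeasure lborel U < \<infinity>" .
  obtain d where d: "d > 0" "\<And>a. cmod a < d \<Longrightarrow> (\<integral>\<^sup>+x. ennreal (indicator U x * (1 - indicator U (x + a))) \<partial>lborel) < ennreal (e/4)"
    using open_shift_small[OF U(1) Ufin e4] by blast
  show ?thesis
  proof (intro exI[of _ d] conjI allI impI)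
    show "d > 0" by fact
    fix a :: complex assume a: "cmod a < d"
    let ?T1 = "\<lambda>x. ennreal (indicator U x * (1 - indicator U (x + a)))"
    let ?T2 = "\<lambda>x. ennreal (indicator U (x + a) * (1 - indicator U x))"
    let ?T3 = "\<lambda>x. ennreal (indicator (U - A) (x + a))"
    let ?T4 = "\<lambda>x. ennreal (indicator (U - A) x)"
    have pt: "ennreal \<bar>indicator A (x + a) - indicator A x\<bar> \<le> ?T1 x + ?T2 x + ?T3 x + ?T4 x" for x
      using U(2) by (cases "x \<in> A"; cases "x + a \<in> A"; cases "x \<in> U"; cases "x + a \<in> U") (auto simp: indicator_def)
    have I1: "integral\<^sup>N lborel ?T1 < ennreal (e/4)" using d(2) a by blast
    have "integral\<^sup>N lborel ?T2 = (\<integral>\<^sup>+x. ennreal (indicator U (x + - a + a) * (1 - indicator U (x + - a))) \<partial>lborel)"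
      by (rule nn_integral_translate) measurable
    also have "\<dots> = (\<integral>\<^sup>+x. ennreal (indicator U x * (1 - indicator U (x + - a))) \<partial>lborel)"
      by simp
    also have "\<dots> < ennreal (e/4)" using d(2)[of "-a"] a by simp
    finally have I2: "integral\<^sup>N lborel ?T2 < ennreal (e/4)" .
    have "integral\<^sup>N lborel ?T3 = integral\<^sup>N lborel ?T4"
      by (rule nn_integral_translate[symmetric]) measurable
    also have "\<dots> = emeasure lborel (U - A)" by (simp add: ennreal_indicator)
    finally have I3: "integral\<^sup>N lborel ?T3 < ennreal (e/4)" using U(3) by simp
    have I4: "integral\<^sup>N lborel ?T4 < ennreal (e/4)" using U(3) by (simp add: ennreal_indicator)
    have "(\<integral>\<^sup>+x. ennreal \<bar>indicator A (x + a) - indicator A x\<bar> \<partial>lborel) \<le> (\<integral>\<^sup>+x. ?T1 x + ?T2 x + ?T3 x + ?T4 x \<partial>lborel)"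
      by (rule nn_integral_mono) (use pt in auto)
    also have "\<dots> = integral\<^sup>N lborel ?T1 + integral\<^sup>N lborel ?T2 + integral\<^sup>N lborel ?T3 + integral\<^sup>N lborel ?T4"
      by (simp add: nn_integral_add)
    also have "\<dots> < ennreal (e/4) + ennreal (e/4) + ennreal (e/4) + ennreal (e/4)"
      by (intro add_strict_mono I1 I2 I3 I4)
    also have "\<dots> = ennreal e" using e by (simp flip: ennreal_plus)
    finally show "(\<integral>\<^sup>+x. ennreal \<bar>indicator A (x + a) - indicator A x\<bar> \<partial>lborel) < ennreal e" .
  qed
qed


definition tcont :: "(complex \<Rightarrow> real) \<Rightarrow> bool" where
  "tcont g \<longleftrightarrow> (\<forall>e>0. \<exists>d>0. \<forall>a. cmod a < d \<longrightarrow> (\<integral>\<^sup>+x. ennreal \<bar>g (x + a) - g x\<bar> \<partial>lborel) < ennreal e)"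

lemma tcont_integrable:
  fixes g :: "complex \<Rightarrow> real"
  assumes "integrable lborel g"
  shows "tcont g"
  using assms
proof (induct rule: integrable_induct)
  case (base A c)
  have Am[measurable]: "A \<in> sets borel" using base by simp
  show ?case unfolding tcont_def
  proof (intro allI impI)
    fix e :: real assume e: "e > 0"
    show "\<exists>d>0. \<forall>a. cmod a < d \<longrightarrow> (\<integral>\<^sup>+x. ennreal \<bar>indicator A (x + a) *\<^sub>R c - indicator A x *\<^sub>R c\<bar> \<partial>lborel) < ennreal e"
    proof (cases "c = 0")
      case True
      then show ?thesis using e by (auto intro!: exI[of _ 1])
    next
      case False
      then have cpos: "\<bar>c\<bar> > 0" by simp
      obtain d where d: "d > 0" "\<And>a. cmod a < d \<Longrightarrow> (\<integral>\<^sup>+x. ennreal \<bar>indicator A (x + a) - indicator A x\<bar> \<partial>lborel) < ennreal (e / \<bar>c\<bar>)"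
        using set_shift_small[OF Am base(2), of "e / \<bar>c\<bar>"] e cpos by auto
      show ?thesis
      proof (intro exI[of _ d] conjI allI impI)
        show "d > 0" by fact
        fix a :: complex assume a: "cmod a < d"
        have "(\<integral>\<^sup>+x. ennreal \<bar>indicator A (x + a) *\<^sub>R c - indicator A x *\<^sub>R c\<bar> \<partial>lborel)
            = (\<integral>\<^sup>+x. ennreal \<bar>c\<bar> * ennreal \<bar>indicator A (x + a) - indicator A x\<bar> \<partial>lborel)"
        proof (intro nn_integral_cong)
          fix x
          have "\<bar>indicator A (x + a) *\<^sub>R c - indicator A x *\<^sub>R c\<bar> = \<bar>c\<bar> * \<bar>indicator A (x + a) - indicator A x\<bar>"
            by (simp add: abs_mult[symmetric] algebra_simps)
          then show "ennreal \<bar>indicator A (x + a) *\<^sub>R c - indicator A x *\<^sub>R c\<bar> = ennreal \<bar>c\<bar> * ennreal \<bar>indicator A (x + a) - indicator A x\<bar>"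
            by (simp add: ennreal_mult)
        qed
        also have "\<dots> = ennreal \<bar>c\<bar> * (\<integral>\<^sup>+x. ennreal \<bar>indicator A (x + a) - indicator A x\<bar> \<partial>lborel)"
          by (rule nn_integral_cmult) measurable
        also have "\<dots> < ennreal \<bar>c\<bar> * ennreal (e / \<bar>c\<bar>)"
          by (rule ennreal_mult_strict_left_mono[OF d(2)[OF a]]) (use cpos in auto)
        also have "\<dots> = ennreal (\<bar>c\<bar> * (e / \<bar>c\<bar>))" using cpos e by (subst ennreal_mult) auto
        also have "\<dots> = ennreal e" using cpos by simp
        finally show "(\<integral>\<^sup>+x. ennreal \<bar>indicator A (x + a) *\<^sub>R c - indicator A x *\<^sub>R c\<bar> \<partial>lborel) < ennreal e" .
      qed
    qed
  qed
next
  case (add f g)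
  have [measurable]: "f \<in> borel_measurable borel" "g \<in> borel_measurable borel"
    using add by (auto dest: borel_measurable_integrable)
  show ?case unfolding tcont_def
  proof (intro allI impI)
    fix e :: real assume e: "e > 0"
    obtain d1 where d1: "d1 > 0" "\<And>a. cmod a < d1 \<Longrightarrow> (\<integral>\<^sup>+x. ennreal \<bar>f (x + a) - f x\<bar> \<partial>lborel) < ennreal (e/2)"
      using add(2) e unfolding tcont_def by (meson half_gt_zero)
    obtain d2 where d2: "d2 > 0" "\<And>a. cmod a < d2 \<Longrightarrow> (\<integral>\<^sup>+x. ennreal \<bar>g (x + a) - g x\<bar> \<partial>lborel) < ennreal (e/2)"
      using add(4) e unfolding tcont_def by (meson half_gt_zero)
    show "\<exists>d>0. \<forall>a. cmod a < d \<longrightarrow> (\<integral>\<^sup>+x. ennreal \<bar>(f (x + a) + g (x + a)) - (f x + g x)\<bar> \<partial>lborel) < ennreal e"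
    proof (intro exI[of _ "min d1 d2"] conjI allI impI)
      show "min d1 d2 > 0" using d1 d2 by simp
      fix a :: complex assume a: "cmod a < min d1 d2"
      have "(\<integral>\<^sup>+x. ennreal \<bar>(f (x + a) + g (x + a)) - (f x + g x)\<bar> \<partial>lborel)
          \<le> (\<integral>\<^sup>+x. ennreal \<bar>f (x + a) - f x\<bar> + ennreal \<bar>g (x + a) - g x\<bar> \<partial>lborel)"
        by (intro nn_integral_mono) (simp flip: ennreal_plus)
      also have "\<dots> = (\<integral>\<^sup>+x. ennreal \<bar>f (x + a) - f x\<bar> \<partial>lborel) + (\<integral>\<^sup>+x. ennreal \<bar>g (x + a) - g x\<bar> \<partial>lborel)"
        by (rule nn_integral_add) measurable
      also have "\<dots> < ennreal (e/2) + ennreal (e/2)"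
        using a by (intro add_strict_mono d1(2) d2(2)) auto
      also have "\<dots> = ennreal e" using e by (simp flip: ennreal_plus)
      finally show "(\<integral>\<^sup>+x. ennreal \<bar>(f (x + a) + g (x + a)) - (f x + g x)\<bar> \<partial>lborel) < ennreal e" .
    qed
  qed
next
  case (lim g s)
  have [measurable]: "g \<in> borel_measurable borel" "\<And>i. s i \<in> borel_measurable borel"
    using lim by (auto dest: borel_measurable_integrable)
  have L: "(\<lambda>i. LINT x|lborel. \<bar>s i x - g x\<bar>) \<longlonglongrightarrow> (LINT (x::complex)|lborel. (0::real))"
  proof (rule Bochner_Integration.integral_dominated_convergence[where w="\<lambda>x. 3 * \<bar>g x\<bar>"])
    show "integrable lborel (\<lambda>x. 3 * \<bar>g x\<bar>)" using lim(5) by auto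
    show "AE x in lborel. (\<lambda>i. \<bar>s i x - g x\<bar>) \<longlonglongrightarrow> 0"
      using lim(3) by (auto intro!: tendsto_rabs_zero LIM_zero)
    show "AE x in lborel. norm \<bar>s i x - g x\<bar> \<le> 3 * \<bar>g x\<bar>" for i
    proof (rule AE_I2)
      fix x
      have "\<bar>s i x\<bar> \<le> 2 * \<bar>g x\<bar>" using lim(4)[of x i] by simp
      then show "norm \<bar>s i x - g x\<bar> \<le> 3 * \<bar>g x\<bar>" by simp
    qed
  qed auto
  show ?case unfolding tcont_def
  proof (intro allI impI)
    fix e :: real assume e: "e > 0"
    have "eventually (\<lambda>i. dist (LINT x|lborel. \<bar>s i x - g x\<bar>) 0 < e/3) sequentially"
      using L[unfolded tendsto_iff, rule_format, of "e/3"] e by simp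
    then obtain i where i: "(LINT x|lborel. \<bar>s i x - g x\<bar>) < e/3"
      by (auto simp: eventually_sequentially dist_real_def) 
    have si: "(\<integral>\<^sup>+x. ennreal \<bar>s i x - g x\<bar> \<partial>lborel) < ennreal (e/3)"
    proof -
      have "integrable lborel (\<lambda>x. \<bar>s i x - g x\<bar>)" using lim(1)[of i] lim(5) by auto
      then have "(\<integral>\<^sup>+x. ennreal \<bar>s i x - g x\<bar> \<partial>lborel) = ennreal (LINT x|lborel. \<bar>s i x - g x\<bar>)"
        by (rule nn_integral_eq_integral) auto
      also have "\<dots> < ennreal (e/3)" using i e by (subst ennreal_less_iff) auto
      finally show ?thesis .
    qed
    have si': "(\<integral>\<^sup>+x. ennreal \<bar>g (x + a) - s i (x + a)\<bar> \<partial>lborel) < ennreal (e/3)" for a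
    proof -
      have "(\<integral>\<^sup>+x. ennreal \<bar>g (x + a) - s i (x + a)\<bar> \<partial>lborel) = (\<integral>\<^sup>+x. ennreal \<bar>g x - s i x\<bar> \<partial>lborel)"
        by (rule nn_integral_translate[symmetric, where h="\<lambda>x. ennreal \<bar>g x - s i x\<bar>"]) measurable
      also have "\<dots> = (\<integral>\<^sup>+x. ennreal \<bar>s i x - g x\<bar> \<partial>lborel)" by (simp add: abs_minus_commute)
      finally show ?thesis using si by simp
    qed
    obtain d where d: "d > 0" "\<And>a. cmod a < d \<Longrightarrow> (\<integral>\<^sup>+x. ennreal \<bar>s i (x + a) - s i x\<bar> \<partial>lborel) < ennreal (e/3)"
      using lim(2)[of i] e unfolding tcont_def by (metis divide_pos_pos zero_less_numeral)
    show "\<exists>d>0. \<forall>a. cmod a < d \<longrightarrow> (\<integral>\<^sup>+x. ennreal \<bar>g (x + a) - g x\<bar> \<partial>lborel) < ennreal e"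
    proof (intro exI[of _ d] conjI allI impI)
      show "d > 0" by fact
      fix a :: complex assume a: "cmod a < d"
      have "(\<integral>\<^sup>+x. ennreal \<bar>g (x + a) - g x\<bar> \<partial>lborel)
          \<le> (\<integral>\<^sup>+x. ennreal \<bar>g (x + a) - s i (x + a)\<bar> + ennreal \<bar>s i (x + a) - s i x\<bar> + ennreal \<bar>s i x - g x\<bar> \<partial>lborel)"
        by (intro nn_integral_mono) (simp flip: ennreal_plus)
      also have "\<dots> = (\<integral>\<^sup>+x. ennreal \<bar>g (x + a) - s i (x + a)\<bar> \<partial>lborel) + (\<integral>\<^sup>+x. ennreal \<bar>s i (x + a) - s i x\<bar> \<partial>lborel) + (\<integral>\<^sup>+x. ennreal \<bar>s i x - g x\<bar> \<partial>lborel)"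
        by (simp add: nn_integral_add)
      also have "\<dots> < ennreal (e/3) + ennreal (e/3) + ennreal (e/3)"
        by (intro add_strict_mono si si' d(2) a)
      also have "\<dots> = ennreal e" using e by (simp flip: ennreal_plus)
      finally show "(\<integral>\<^sup>+x. ennreal \<bar>g (x + a) - g x\<bar> \<partial>lborel) < ennreal e" .
    qed
  qed
qed


lemma am_gm_t:
  fixes a e t :: real
  assumes "t > 0"
  shows "a * e \<le> t * a^2 + e^2 / (4*t)"
proof -
  have "t * a^2 + e^2 / (4*t) - a * e = (2*t*a - e)^2 / (4*t)"
    using assms by (simp add: field_simps power2_eq_square)
  also have "\<dots> \<ge> 0" using assms by simp
  finally show ?thesis by simp
qed

lemma key_ineq:
  fixes a b x M t :: real
  assumes "a \<ge> 0" "b \<ge> 0" "x \<ge> 0" "M \<ge> 0" "t > 0"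
  shows "\<bar>a - b\<bar> * x \<le> M * \<bar>a - b\<bar> + t * a^2 + t * b^2 + (max (x - M) 0)^2 / t"
proof -
  define e where "e = max (x - M) 0"
  have e0: "e \<ge> 0" by (simp add: e_def)
  have xle: "x \<le> M + e" by (simp add: e_def)
  have h0: "\<bar>a - b\<bar> * x \<le> \<bar>a - b\<bar> * (M + e)" using xle by (simp add: mult_left_mono)
  have h1: "\<bar>a - b\<bar> * e \<le> (a + b) * e" using assms e0 by (intro mult_right_mono) auto
  have h2: "a * e \<le> t * a^2 + e^2 / (4*t)" "b * e \<le> t * b^2 + e^2 / (4*t)"
    using am_gm_t assms(5) by auto
  have h3: "e^2 / (4*t) + e^2 / (4*t) \<le> e^2 / t"
    using assms(5) by (simp add: field_simps)
  have "\<bar>a - b\<bar> * x \<le> M * \<bar>a - b\<bar> + t * a^2 + t * b^2 + e^2 / t"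
    using h0 h1 h2 h3 by (simp add: algebra_simps)
  then show ?thesis by (simp add: e_def)
qed

lemma tail_L2:
  fixes f :: "complex \<Rightarrow> real"
  assumes [measurable]: "f \<in> borel_measurable borel" and f0: "\<And>x. f x \<ge> 0"
    and f2: "integrable lborel (\<lambda>x. (f x)^2)"
  shows "(\<lambda>n. LINT x|lborel. (max (f x - real n) 0)^2) \<longlonglongrightarrow> 0"
proof -
  have "(\<lambda>n. LINT x|lborel. (max (f x - real n) 0)^2) \<longlonglongrightarrow> (LINT (x::complex)|lborel. (0::real))"
  proof (rule Bochner_Integration.integral_dominated_convergence[OF _ _ f2])
    show "AE x in lborel. (\<lambda>n. (max (f x - real n) 0)^2) \<longlonglongrightarrow> 0"
    proof (rule AE_I2)
      fix x
      obtain N :: nat where N: "f x \<le> real N" using real_arch_simple by blast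
      have "eventually (\<lambda>n. (max (f x - real n) 0)^2 = (0::real)) sequentially"
        unfolding eventually_sequentially
      proof (intro exI[of _ N] allI impI)
        fix n assume "n \<ge> N"
        then have "real N \<le> real n" by simp
        then have "f x \<le> real n" using N by linarith
        then show "(max (f x - real n) 0)^2 = 0" by simp
      qed
      then show "(\<lambda>n. (max (f x - real n) 0)^2) \<longlonglongrightarrow> 0" by (rule tendsto_eventually)
    qed
    show "AE x in lborel. norm ((max (f x - real n) 0)^2) \<le> (f x)^2" for n
    proof (rule AE_I2)
      fix x
      have "0 \<le> max (f x - real n) 0" "max (f x - real n) 0 \<le> f x" using f0[of x] by auto
      then show "norm ((max (f x - real n) 0)^2) \<le> (f x)^2"
        by (simp add: power_mono)
    qed
  qed auto
  then show ?thesis by simp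
qed


lemma ennreal_lin4:
  fixes a1 a2 a3 a4 x1 x2 x3 x4 :: real
  assumes "a1 \<ge> 0" "a2 \<ge> 0" "a3 \<ge> 0" "a4 \<ge> 0" "x1 \<ge> 0" "x2 \<ge> 0" "x3 \<ge> 0" "x4 \<ge> 0"
  shows "ennreal (a1*x1 + a2*x2 + a3*x3 + a4*x4) = ennreal a1 * ennreal x1 + ennreal a2 * ennreal x2 + ennreal a3 * ennreal x3 + ennreal a4 * ennreal x4"
proof -
  have p: "a1*x1 \<ge> 0" "a2*x2 \<ge> 0" "a3*x3 \<ge> 0" "a4*x4 \<ge> 0" using assms by auto
  have "ennreal (a1*x1 + a2*x2 + a3*x3 + a4*x4) = ennreal (a1*x1 + a2*x2 + a3*x3) + ennreal (a4*x4)"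
    using p by (intro ennreal_plus) auto
  also have "ennreal (a1*x1 + a2*x2 + a3*x3) = ennreal (a1*x1 + a2*x2) + ennreal (a3*x3)"
    using p by (intro ennreal_plus) auto
  also have "ennreal (a1*x1 + a2*x2) = ennreal (a1*x1) + ennreal (a2*x2)"
    using p by (intro ennreal_plus) auto
  finally show ?thesis using assms by (simp add: ennreal_mult)
qed

context
  fixes f :: "complex \<Rightarrow> real" and c :: complex
  assumes fm[measurable]: "f \<in> borel_measurable borel" and f0: "\<And>x. f x \<ge> 0"
    and f1: "integrable lborel f" and f2: "integrable lborel (\<lambda>x. (f x)^2)" and c0: "c \<noteq> 0"
begin

lemma scale_nn:
  assumes hm[measurable]: "h \<in> borel_measurable borel"
  shows "(\<integral>\<^sup>+s. h (w - c * s) \<partial>lborel) = ennreal (1/(cmod c)^2) * (\<integral>\<^sup>+x. h x \<partial>lborel)"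
proof -
  have "ennreal (1/(cmod c)^2) * (\<integral>\<^sup>+x. h x \<partial>lborel) = ennreal (1/(cmod c)^2) * (ennreal ((cmod c)^2) * (\<integral>\<^sup>+s. h (w - c * s) \<partial>lborel))"
    using nn_integral_complex_affine[OF hm c0, of w] by simp
  also have "\<dots> = (\<integral>\<^sup>+s. h (w - c * s) \<partial>lborel)"
    using c0 by (simp add: mult.assoc[symmetric] ennreal_mult[symmetric])
  finally show ?thesis by simp
qed

lemma int_shift:
  fixes g :: "complex \<Rightarrow> real"
  assumes g: "integrable lborel g"
  shows "integrable lborel (\<lambda>s. g (w - c * s))"
proof -
  have gm[measurable]: "g \<in> borel_measurable borel" using g by auto
  have "(\<integral>\<^sup>+s. ennreal (norm (g (w - c * s))) \<partial>lborel) = ennreal (1/(cmod c)^2) * (\<integral>\<^sup>+x. ennreal (norm (g x)) \<partial>lborel)"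
    by (rule scale_nn) measurable
  also have "\<dots> < \<infinity>"
    using g unfolding integrable_iff_bounded by (simp add: ennreal_mult_less_top)
  finally show ?thesis unfolding integrable_iff_bounded by simp
qed

lemma int_prod: "integrable lborel (\<lambda>s. f (w - c * s) * f s)"
proof (rule Bochner_Integration.integrable_bound)
  show "integrable lborel (\<lambda>s. (f (w - c * s))^2 + (f s)^2)"
    using int_shift[OF f2] f2 by auto
  show "AE s in lborel. norm (f (w - c * s) * f s) \<le> norm ((f (w - c * s))^2 + (f s)^2)"
  proof (rule AE_I2)
    fix s
    have "0 \<le> (f (w - c * s) - f s)^2" by simp
    then have "2 * (f (w - c * s) * f s) \<le> (f (w - c * s))^2 + (f s)^2"
      by (simp add: power2_eq_square algebra_simps)
    moreover have "0 \<le> f (w - c * s) * f s" using f0 by simp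
    ultimately show "norm (f (w - c * s) * f s) \<le> norm ((f (w - c * s))^2 + (f s)^2)"
      by simp
  qed
qed measurable

lemma nn_sq_shift: "(\<integral>\<^sup>+s. ennreal ((f (w - c * s))^2) \<partial>lborel) = ennreal (1/(cmod c)^2) * ennreal (LINT x|lborel. (f x)^2)"
proof -
  have "(\<integral>\<^sup>+s. ennreal ((f (w - c * s))^2) \<partial>lborel) = ennreal (1/(cmod c)^2) * (\<integral>\<^sup>+x. ennreal ((f x)^2) \<partial>lborel)"
    by (rule scale_nn) measurable
  also have "(\<integral>\<^sup>+x. ennreal ((f x)^2) \<partial>lborel) = ennreal (LINT x|lborel. (f x)^2)"
    by (rule nn_integral_eq_integral[OF f2]) auto
  finally show ?thesis .
qed

lemma conv_cont: "continuous_on UNIV (\<lambda>w. LINT s|lborel. f (w - c * s) * f s)"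
proof (rule continuous_at_imp_continuous_on, intro ballI)
  fix w0 :: complex
  define p where "p w = (LINT s|lborel. f (w - c * s) * f s)" for w
  define K where "K = 1/(cmod c)^2"
  define Q where "Q = (LINT x|lborel. (f x)^2)"
  have K0: "K > 0" using c0 by (simp add: K_def)
  have Q0: "Q \<ge> 0" unfolding Q_def by (rule integral_nonneg_AE) auto
  have ft: "tcont f" by (rule tcont_integrable[OF f1])
  show "isCont (\<lambda>w. LINT s|lborel. f (w - c * s) * f s) w0"
    unfolding continuous_at_eps_delta
  proof (intro allI impI)
    fix \<epsilon> :: real assume \<epsilon>: "\<epsilon> > 0"
    define t where "t = \<epsilon> / (12 * (K*Q + 1))"
    have KQ0: "K*Q \<ge> 0" using K0 Q0 by simp
    have t0: "t > 0" unfolding t_def using \<epsilon> KQ0 by (intro divide_pos_pos) auto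
    have tKQ: "t * K * Q \<le> \<epsilon>/12"
    proof -
      have "K*Q/(K*Q+1) \<le> 1" using KQ0 by (simp add: divide_le_eq)
      then have "(\<epsilon>/12) * (K*Q/(K*Q+1)) \<le> (\<epsilon>/12) * 1" using \<epsilon> by (intro mult_left_mono) auto
      moreover have "t * K * Q = (\<epsilon>/12) * (K*Q/(K*Q+1))" using K0 Q0 by (simp add: t_def field_simps)
      ultimately show ?thesis by simp
    qed
    have "t * \<epsilon> / 6 > 0" using t0 \<epsilon> by simp
    from tail_L2[OF fm f0 f2, unfolded tendsto_iff, rule_format, OF this]
    obtain n :: nat where n: "dist (LINT x|lborel. (max (f x - real n) 0)^2) 0 < t * \<epsilon> / 6"
      by (auto simp: eventually_sequentially)
    define E where "E = (LINT x|lborel. (max (f x - real n) 0)^2)"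
    have E: "E \<le> t * \<epsilon> / 6" using n by (simp add: E_def)
    have intE: "integrable lborel (\<lambda>x. (max (f x - real n) 0)^2)"
    proof (rule Bochner_Integration.integrable_bound[OF f2])
      show "AE x in lborel. norm ((max (f x - real n) 0)^2) \<le> norm ((f x)^2)"
      proof (rule AE_I2)
        fix x
        have "0 \<le> max (f x - real n) 0" "max (f x - real n) 0 \<le> f x" using f0[of x] by auto
        then show "norm ((max (f x - real n) 0)^2) \<le> norm ((f x)^2)" by (simp add: power_mono)
      qed
    qed measurable
    define \<epsilon>' where "\<epsilon>' = \<epsilon> / (6 * (real n * K + 1))"
    have nK0': "real n * K \<ge> 0" using K0 by simp
    have \<epsilon>'0: "\<epsilon>' > 0" unfolding \<epsilon>'_def using \<epsilon> nK0' by (intro divide_pos_pos) auto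
    have nKe: "real n * K * \<epsilon>' \<le> \<epsilon>/6"
    proof -
      have nK0: "real n * K \<ge> 0" using K0 by simp
      then have "real n * K/(real n * K+1) \<le> 1" by (simp add: divide_le_eq)
      then have "(\<epsilon>/6) * (real n * K/(real n * K+1)) \<le> (\<epsilon>/6) * 1" using \<epsilon> by (intro mult_left_mono) auto
      moreover have "real n * K * \<epsilon>' = (\<epsilon>/6) * (real n * K/(real n * K+1))"
        using K0 by (simp add: \<epsilon>'_def field_simps add_pos_nonneg)
      ultimately show ?thesis by simp
    qed
    obtain \<delta> where \<delta>: "\<delta> > 0" "\<And>a. cmod a < \<delta> \<Longrightarrow> (\<integral>\<^sup>+x. ennreal \<bar>f (x + a) - f x\<bar> \<partial>lborel) < ennreal \<epsilon>'"
      using ft \<epsilon>'0 unfolding tcont_def by blast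
    show "\<exists>\<delta>>0. \<forall>w. dist w w0 < \<delta> \<longrightarrow> dist (LINT s|lborel. f (w - c * s) * f s) (LINT s|lborel. f (w0 - c * s) * f s) < \<epsilon>"
    proof (intro exI[of _ \<delta>] conjI allI impI)
      show "\<delta> > 0" by fact
      fix w assume w: "dist w w0 < \<delta>"
      let ?D = "\<lambda>s. \<bar>f (w - c * s) - f (w0 - c * s)\<bar>"
      let ?e = "\<lambda>s. (max (f s - real n) 0)^2"
      have ID: "(\<integral>\<^sup>+s. ennreal (?D s) \<partial>lborel) \<le> ennreal (K * \<epsilon>')"
      proof -
        have "(\<integral>\<^sup>+s. ennreal (?D s) \<partial>lborel) = (\<integral>\<^sup>+s. ennreal \<bar>f (w0 - c * s + (w - w0)) - f (w0 - c * s)\<bar> \<partial>lborel)"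
          by (simp add: algebra_simps)
        also have "\<dots> = ennreal K * (\<integral>\<^sup>+x. ennreal \<bar>f (x + (w - w0)) - f x\<bar> \<partial>lborel)"
          unfolding K_def by (rule scale_nn[where h="\<lambda>x. ennreal \<bar>f (x + (w - w0)) - f x\<bar>"]) measurable
        also have "\<dots> \<le> ennreal K * ennreal \<epsilon>'"
          using \<delta>(2)[of "w - w0"] w by (intro mult_left_mono) (auto simp: dist_norm)
        also have "\<dots> = ennreal (K * \<epsilon>')" using K0 by (intro ennreal_mult'[symmetric]) simp
        finally show ?thesis .
      qed
      have pw: "ennreal (norm (f (w - c * s) * f s - f (w0 - c * s) * f s))
          \<le> ennreal (real n) * ennreal (?D s) + ennreal t * ennreal ((f (w - c * s))^2) + ennreal t * ennreal ((f (w0 - c * s))^2) + ennreal (1/t) * ennreal (?e s)" for s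
      proof -
        have "norm (f (w - c * s) * f s - f (w0 - c * s) * f s) = ?D s * f s"
          using f0[of s] by (simp add: left_diff_distrib[symmetric] abs_mult)
        also have "\<dots> \<le> real n * ?D s + t * (f (w - c * s))^2 + t * (f (w0 - c * s))^2 + (1/t) * ?e s"
          using key_ineq[of "f (w - c * s)" "f (w0 - c * s)" "f s" "real n" t] f0 t0 by simp
        finally have "ennreal (norm (f (w - c * s) * f s - f (w0 - c * s) * f s)) \<le> ennreal (real n * ?D s + t * (f (w - c * s))^2 + t * (f (w0 - c * s))^2 + (1/t) * ?e s)"
          by (rule ennreal_leI)
        also have "\<dots> = ennreal (real n) * ennreal (?D s) + ennreal t * ennreal ((f (w - c * s))^2) + ennreal t * ennreal ((f (w0 - c * s))^2) + ennreal (1/t) * ennreal (?e s)"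
          using t0 f0 by (intro ennreal_lin4) auto
        finally show ?thesis .
      qed
      have "ennreal (norm (p w - p w0)) = ennreal (norm (LINT s|lborel. f (w - c * s) * f s - f (w0 - c * s) * f s))"
        unfolding p_def by (subst Bochner_Integration.integral_diff[OF int_prod int_prod]) simp
      also have "\<dots> \<le> (\<integral>\<^sup>+s. norm (f (w - c * s) * f s - f (w0 - c * s) * f s) \<partial>lborel)"
        by (rule integral_norm_bound_ennreal) (intro Bochner_Integration.integrable_diff int_prod)
      also have "\<dots> \<le> (\<integral>\<^sup>+s. ennreal (real n) * ennreal (?D s) + ennreal t * ennreal ((f (w - c * s))^2) + ennreal t * ennreal ((f (w0 - c * s))^2) + ennreal (1/t) * ennreal (?e s) \<partial>lborel)"
        by (rule nn_integral_mono) (rule pw)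
      also have "\<dots> = ennreal (real n) * (\<integral>\<^sup>+s. ennreal (?D s) \<partial>lborel) + ennreal t * (\<integral>\<^sup>+s. ennreal ((f (w - c * s))^2) \<partial>lborel) + ennreal t * (\<integral>\<^sup>+s. ennreal ((f (w0 - c * s))^2) \<partial>lborel) + ennreal (1/t) * (\<integral>\<^sup>+s. ennreal (?e s) \<partial>lborel)"
        by (simp add: nn_integral_add nn_integral_cmult)
      also have "\<dots> \<le> ennreal (real n) * ennreal (K * \<epsilon>') + ennreal t * (ennreal K * ennreal Q) + ennreal t * (ennreal K * ennreal Q) + ennreal (1/t) * ennreal E"
      proof -
        have "(\<integral>\<^sup>+s. ennreal (?e s) \<partial>lborel) = ennreal E"
          unfolding E_def by (rule nn_integral_eq_integral[OF intE]) auto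
        then show ?thesis
          using ID by (auto simp: nn_sq_shift K_def Q_def intro!: add_mono mult_left_mono)
      qed
      also have "\<dots> = ennreal (real n * (K * \<epsilon>') + t * (K * Q) + t * (K * Q) + (1/t) * E)"
      proof -
        have E0: "E \<ge> 0" unfolding E_def by (rule integral_nonneg_AE) auto
        have "ennreal (K * \<epsilon>') = ennreal K * ennreal \<epsilon>'" "ennreal (K * Q) = ennreal K * ennreal Q"
          using K0 Q0 \<epsilon>'0 by (simp_all add: ennreal_mult)
        moreover have "ennreal (real n * (K * \<epsilon>') + t * (K * Q) + t * (K * Q) + (1/t) * E)
          = ennreal (real n) * ennreal (K * \<epsilon>') + ennreal t * ennreal (K * Q) + ennreal t * ennreal (K * Q) + ennreal (1/t) * ennreal E"
          using K0 Q0 t0 \<epsilon>'0 E0 by (intro ennreal_lin4) auto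
        ultimately show ?thesis by simp
      qed
      also have "\<dots> \<le> ennreal (\<epsilon>/6 + \<epsilon>/12 + \<epsilon>/12 + \<epsilon>/6)"
      proof (rule ennreal_leI)
        have "(1/t) * E \<le> \<epsilon>/6" using E t0 by (simp add: divide_le_eq mult.commute)
        moreover have "real n * (K * \<epsilon>') \<le> \<epsilon>/6" using nKe by (simp add: mult.assoc)
        moreover have "t * (K * Q) \<le> \<epsilon>/12" using tKQ by (simp add: mult.assoc)
        ultimately show "real n * (K * \<epsilon>') + t * (K * Q) + t * (K * Q) + (1/t) * E \<le> \<epsilon>/6 + \<epsilon>/12 + \<epsilon>/12 + \<epsilon>/6"
          by linarith
      qed
      finally have "norm (p w - p w0) \<le> \<epsilon>/2"
        using \<epsilon> by (subst (asm) ennreal_le_iff) auto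
      then show "dist (LINT s|lborel. f (w - c * s) * f s) (LINT s|lborel. f (w0 - c * s) * f s) < \<epsilon>"
        using \<epsilon> by (simp add: p_def dist_norm)
    qed
  qed
qed

end


lemma distr_add_density:
  fixes g :: "complex \<Rightarrow> ennreal" and \<phi> :: "'b \<Rightarrow> complex" and \<mu> :: "'b measure"
  assumes gm[measurable]: "g \<in> borel_measurable borel" and phim[measurable]: "\<phi> \<in> borel_measurable \<mu>"
    and sf: "sigma_finite_measure \<mu>"
  shows "distr (density lborel g \<Otimes>\<^sub>M \<mu>) borel (\<lambda>(a, r). a + \<phi> r) = density lborel (\<lambda>x. \<integral>\<^sup>+r. g (x - \<phi> r) \<partial>\<mu>)"
proof (rule measure_eqI)
  interpret mu: sigma_finite_measure \<mu> by (rule sf)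
  interpret P: pair_sigma_finite lborel \<mu> by unfold_locales
  show "sets (distr (density lborel g \<Otimes>\<^sub>M \<mu>) borel (\<lambda>(a, r). a + \<phi> r)) = sets (density lborel (\<lambda>x. \<integral>\<^sup>+r. g (x - \<phi> r) \<partial>\<mu>))"
    by simp
  fix A assume "A \<in> sets (distr (density lborel g \<Otimes>\<^sub>M \<mu>) borel (\<lambda>(a, r). a + \<phi> r))"
  then have Am[measurable]: "A \<in> sets borel" by simp
  have Fm[measurable]: "(\<lambda>(a, r). a + \<phi> r) \<in> (density lborel g \<Otimes>\<^sub>M \<mu>) \<rightarrow>\<^sub>M borel"
    by measurable
  have "emeasure (distr (density lborel g \<Otimes>\<^sub>M \<mu>) borel (\<lambda>(a, r). a + \<phi> r)) A
      = (\<integral>\<^sup>+x. indicator A x \<partial>distr (density lborel g \<Otimes>\<^sub>M \<mu>) borel (\<lambda>(a, r). a + \<phi> r))"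
    by simp
  also have "\<dots> = (\<integral>\<^sup>+z. indicator A (case z of (a, r) \<Rightarrow> a + \<phi> r) \<partial>(density lborel g \<Otimes>\<^sub>M \<mu>))"
    by (rule nn_integral_distr) measurable
  also have "\<dots> = (\<integral>\<^sup>+a. \<integral>\<^sup>+r. indicator A (a + \<phi> r) \<partial>\<mu> \<partial>density lborel g)"
    by (subst mu.nn_integral_fst[symmetric]) (auto simp: case_prod_beta')
  also have "\<dots> = (\<integral>\<^sup>+a. g a * \<integral>\<^sup>+r. indicator A (a + \<phi> r) \<partial>\<mu> \<partial>lborel)"
    by (rule nn_integral_density) measurable
  also have "\<dots> = (\<integral>\<^sup>+a. \<integral>\<^sup>+r. g a * indicator A (a + \<phi> r) \<partial>\<mu> \<partial>lborel)"
    by (intro nn_integral_cong nn_integral_cmult[symmetric]) measurable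
  also have "\<dots> = (\<integral>\<^sup>+r. \<integral>\<^sup>+a. g a * indicator A (a + \<phi> r) \<partial>lborel \<partial>\<mu>)"
    apply (rule P.Fubini'[symmetric])
    print_state
    apply measurable
    done
  also have "\<dots> = (\<integral>\<^sup>+r. \<integral>\<^sup>+x. g (x - \<phi> r) * indicator A x \<partial>lborel \<partial>\<mu>)"
  proof (rule nn_integral_cong)
    fix r assume "r \<in> space \<mu>"
    show "(\<integral>\<^sup>+a. g a * indicator A (a + \<phi> r) \<partial>lborel) = (\<integral>\<^sup>+x. g (x - \<phi> r) * indicator A x \<partial>lborel)"
      using nn_integral_translate[of "\<lambda>x. g (x - \<phi> r) * indicator A x" "\<phi> r"] by simp
  qed
  also have "\<dots> = (\<integral>\<^sup>+x. \<integral>\<^sup>+r. g (x - \<phi> r) * indicator A x \<partial>\<mu> \<partial>lborel)"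
    by (rule P.Fubini') measurable
  also have "\<dots> = (\<integral>\<^sup>+x. (\<integral>\<^sup>+r. g (x - \<phi> r) \<partial>\<mu>) * indicator A x \<partial>lborel)"
    by (intro nn_integral_cong nn_integral_multc) measurable
  also have "\<dots> = emeasure (density lborel (\<lambda>x. \<integral>\<^sup>+r. g (x - \<phi> r) \<partial>\<mu>)) A"
    by (rule emeasure_density[symmetric]) measurable
  finally show "emeasure (distr (density lborel g \<Otimes>\<^sub>M \<mu>) borel (\<lambda>(a, r). a + \<phi> r)) A = emeasure (density lborel (\<lambda>x. \<integral>\<^sup>+r. g (x - \<phi> r) \<partial>\<mu>)) A" .
qed


definition sgnb :: "bool \<Rightarrow> complex" where "sgnb b = (if b then 1 else -1)"

lemma norm_sgnb[simp]: "norm (sgnb b) = 1" by (simp add: sgnb_def)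

lemma sign_series_sgnb: "sign_series \<mu> \<omega> = (\<Sum>n. sgnb (\<omega> n) * \<mu> ^ n)"
  by (simp add: sign_series_def sgnb_def)

lemma summable_sgnb:
  assumes "cmod \<mu> < 1"
  shows "summable (\<lambda>n. sgnb (\<omega> n) * \<mu> ^ n)"
proof (rule summable_comparison_test[where g="\<lambda>n. cmod \<mu> ^ n"])
  show "\<exists>N. \<forall>n\<ge>N. norm (sgnb (\<omega> n) * \<mu> ^ n) \<le> cmod \<mu> ^ n"
    by (auto simp: norm_mult norm_power)
  show "summable (\<lambda>n. cmod \<mu> ^ n)" using assms by (simp add: summable_geometric)
qed

lemma series_split:
  fixes lam :: complex and \<omega> :: "nat \<Rightarrow> bool" and k :: nat
  assumes lam: "cmod lam < 1" and k: "k \<ge> 2"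
  shows "sign_series lam \<omega> = sign_series (lam^k) (\<lambda>m. \<omega> (k*m)) + lam * sign_series (lam^k) (\<lambda>m. \<omega> (k*m+1))
           + (\<Sum>n. if 2 \<le> n mod k then sgnb (\<omega> n) * lam^n else 0)"
proof -
  define a where "a n = sgnb (\<omega> n) * lam ^ n" for n
  define a0 where "a0 n = (if n mod k = 0 then a n else 0)" for n
  define a1 where "a1 n = (if n mod k = 1 then a n else 0)" for n
  define a2 where "a2 n = (if 2 \<le> n mod k then a n else 0)" for n
  have geo: "summable (\<lambda>n. cmod lam ^ n)" using lam by (simp add: summable_geometric)
  have na: "norm (a n) = cmod lam ^ n" for n by (simp add: a_def norm_mult norm_power)
  have s0: "summable a0"
    by (rule summable_comparison_test[OF _ geo]) (auto simp: a0_def na)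
  have s1: "summable a1"
    by (rule summable_comparison_test[OF _ geo]) (auto simp: a1_def na)
  have s2: "summable a2"
    by (rule summable_comparison_test[OF _ geo]) (auto simp: a2_def na)
  have aeq: "a = (\<lambda>n. a0 n + a1 n + a2 n)"
    by (auto simp: fun_eq_iff a0_def a1_def a2_def)
  have "sign_series lam \<omega> = suminf a" by (simp add: sign_series_sgnb a_def[abs_def])
  also have "\<dots> = suminf a0 + suminf a1 + suminf a2"
    unfolding aeq using s0 s1 s2 by (simp add: suminf_add summable_add)
  also have "suminf a0 = sign_series (lam^k) (\<lambda>m. \<omega> (k*m))"
  proof -
    have sm: "strict_mono (\<lambda>m. k*m)" using k by (auto simp: strict_mono_def)
    have "suminf a0 = suminf (\<lambda>m. a0 (k*m))"
    proof (rule suminf_mono_reindex[OF sm, symmetric])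
      fix n assume "n \<notin> range (\<lambda>m. k*m)"
      then have "n mod k \<noteq> 0" by (metis mod_mult_div_eq add_0 rangeI)
      then show "a0 n = 0" by (simp add: a0_def)
    qed
    also have "(\<lambda>m. a0 (k*m)) = (\<lambda>m. sgnb (\<omega> (k*m)) * (lam^k)^m)"
      by (auto simp: fun_eq_iff a0_def a_def power_mult)
    finally show ?thesis by (simp add: sign_series_sgnb)
  qed
  also have "suminf a1 = lam * sign_series (lam^k) (\<lambda>m. \<omega> (k*m+1))"
  proof -
    have sm: "strict_mono (\<lambda>m. k*m+1)" using k by (auto simp: strict_mono_def)
    have "suminf a1 = suminf (\<lambda>m. a1 (k*m+1))"
    proof (rule suminf_mono_reindex[OF sm, symmetric])
      fix n assume n: "n \<notin> range (\<lambda>m. k*m+1)"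
      have "n mod k \<noteq> 1"
      proof
        assume "n mod k = 1"
        then have "n = k * (n div k) + 1" by (metis mod_mult_div_eq add.commute)
        then show False using n by blast
      qed
      then show "a1 n = 0" by (simp add: a1_def)
    qed
    also have "(\<lambda>m. a1 (k*m+1)) = (\<lambda>m. lam * (sgnb (\<omega> (k*m+1)) * (lam^k)^m))"
    proof -
      have "(k*m+1) mod k = 1" for m using k by (simp add: mod_Suc)
      moreover have "lam^(k*m+1) = lam * (lam^k)^m" for m by (simp add: power_add power_mult)
      ultimately show ?thesis by (auto simp: fun_eq_iff a1_def a_def mult_ac)
    qed
    also have "suminf \<dots> = lam * suminf (\<lambda>m. sgnb (\<omega> (k*m+1)) * (lam^k)^m)"
    proof (rule suminf_mult)
      have "cmod (lam^k) < 1" using lam k by (simp add: norm_power power_less_one_iff)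
      then show "summable (\<lambda>m. sgnb (\<omega> (k*m+1)) * (lam^k)^m)" by (rule summable_sgnb)
    qed
    finally show ?thesis by (simp add: sign_series_sgnb)
  qed
  also have "a2 = (\<lambda>n. if 2 \<le> n mod k then sgnb (\<omega> n) * lam^n else 0)"
    by (rule ext) (simp add: a2_def a_def)
  finally show ?thesis .
qed


abbreviation BB :: "bool measure" where "BB \<equiv> measure_pmf (bernoulli_pmf (1/2))"

lemma coin_prob: "prob_space coin_space"
  unfolding coin_space_def by (intro prob_space_PiM measure_pmf.prob_space_axioms)

lemma sgnb_meas[measurable]: "sgnb \<in> BB \<rightarrow>\<^sub>M borel"
  by (simp add: measurable_pmf_measure1)

lemma term_meas:
  "(\<lambda>\<omega>. if n \<in> I then sgnb (\<omega> n) * c else 0) \<in> borel_measurable (PiM I (\<lambda>_. BB))"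
proof (cases "n \<in> I")
  case True
  have "(\<lambda>\<omega>. \<omega> n) \<in> PiM I (\<lambda>_. BB) \<rightarrow>\<^sub>M BB" using True by (rule measurable_component_singleton)
  then have "(\<lambda>\<omega>. sgnb (\<omega> n) * c) \<in> borel_measurable (PiM I (\<lambda>_. BB))" by measurable
  then show ?thesis using True by simp
qed simp

lemma series_meas:
  assumes "\<And>m. T m \<in> I"
  shows "(\<lambda>\<omega>. sign_series \<mu> (\<lambda>m. \<omega> (T m))) \<in> borel_measurable (PiM I (\<lambda>_. BB))"
proof -
  have "(\<lambda>\<omega>. \<Sum>m. sgnb (\<omega> (T m)) * \<mu> ^ m) \<in> borel_measurable (PiM I (\<lambda>_. BB))"
  proof (rule borel_measurable_suminf)
    fix m
    have "(\<lambda>\<omega>. \<omega> (T m)) \<in> PiM I (\<lambda>_. BB) \<rightarrow>\<^sub>M BB" using assms by (rule measurable_component_singleton)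
    then show "(\<lambda>\<omega>. sgnb (\<omega> (T m)) * \<mu> ^ m) \<in> borel_measurable (PiM I (\<lambda>_. BB))" by measurable
  qed
  then show ?thesis by (simp add: sign_series_sgnb)
qed

lemma rest_meas:
  "(\<lambda>\<omega>. \<Sum>n. if n \<in> I then sgnb (\<omega> n) * c ^ n else 0) \<in> borel_measurable (PiM I (\<lambda>_. BB))"
  by (rule borel_measurable_suminf) (rule term_meas)

lemma coin_indep: "prob_space.indep_vars coin_space (\<lambda>_. BB) (\<lambda>i \<omega>. \<omega> i) UNIV"
proof -
  interpret prob_space coin_space by (rule coin_prob)
  have rv: "random_variable BB (\<lambda>\<omega>. \<omega> i)" for i
    unfolding coin_space_def by (rule measurable_component_singleton) simp
  show ?thesis
  proof (subst indep_vars_iff_distr_eq_PiM)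
    show "distr coin_space (PiM UNIV (\<lambda>_. BB)) (\<lambda>x. \<lambda>i\<in>UNIV. x i) = PiM UNIV (\<lambda>i. distr coin_space BB (\<lambda>\<omega>. \<omega> i))"
    proof -
      have "distr coin_space BB (\<lambda>\<omega>. \<omega> i) = BB" for i
        unfolding coin_space_def by (rule distr_PiM_component) (auto intro: measure_pmf.prob_space_axioms)
      moreover have "distr coin_space (PiM UNIV (\<lambda>_. BB)) (\<lambda>x. \<lambda>i\<in>UNIV. x i) = coin_space"
        unfolding coin_space_def by (simp add: restrict_UNIV distr_id2)
      ultimately show ?thesis by (simp add: coin_space_def)
    qed
  qed (use rv in auto)
qed

lemma coin_reindex:
  assumes "inj f"
  shows "distr coin_space coin_space (\<lambda>\<omega> n. \<omega> (f n)) = coin_space"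
  using distr_PiM_reindex[of UNIV "\<lambda>_. BB" f UNIV] assms
  by (simp add: coin_space_def restrict_UNIV measure_pmf.prob_space_axioms)


lemma shift_meas: "(\<lambda>\<omega> n. \<omega> (f n)) \<in> coin_space \<rightarrow>\<^sub>M coin_space"
  unfolding coin_space_def
  by (rule measurable_PiM_single') (auto intro: measurable_component_singleton)

lemma sign_series_meas_coin[measurable]: "sign_series \<mu> \<in> borel_measurable coin_space"
  using series_meas[of id UNIV \<mu>] by (simp add: coin_space_def)

lemma law_shift:
  assumes "inj f"
  shows "distr coin_space borel (\<lambda>\<omega>. sign_series \<mu> (\<lambda>m. \<omega> (f m))) = nu \<mu>"
proof -
  have "distr coin_space borel (\<lambda>\<omega>. sign_series \<mu> (\<lambda>m. \<omega> (f m))) = distr coin_space borel (sign_series \<mu> \<circ> (\<lambda>\<omega> n. \<omega> (f n)))"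
    by (simp add: comp_def)
  also have "\<dots> = distr (distr coin_space coin_space (\<lambda>\<omega> n. \<omega> (f n))) borel (sign_series \<mu>)"
    by (rule distr_distr[symmetric]) (auto intro: shift_meas)
  also have "\<dots> = nu \<mu>" by (simp add: coin_reindex[OF assms] nu_def)
  finally show ?thesis .
qed

lemma (in prob_space) distr_sum_indep:
  fixes X Y :: "'a \<Rightarrow> complex"
  assumes ind: "indep_var borel X borel Y"
  shows "distr M borel (\<lambda>\<omega>. X \<omega> + Y \<omega>) = distr (distr M borel X \<Otimes>\<^sub>M distr M borel Y) borel (\<lambda>(a, b). a + b)"
proof -
  have rv: "random_variable borel X" "random_variable borel Y"
    using ind by (auto simp: indep_var_distribution_eq)
  have eq: "distr M borel X \<Otimes>\<^sub>M distr M borel Y = distr M (borel \<Otimes>\<^sub>M borel) (\<lambda>x. (X x, Y x))"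
    using ind by (simp add: indep_var_distribution_eq)
  show ?thesis unfolding eq
    by (subst distr_distr) (use rv in \<open>auto simp: comp_def\<close>)
qed

lemma law_decomp:
  fixes lam :: complex and k :: nat
  assumes lam: "cmod lam < 1" and k: "k \<ge> 2"
  shows "nu lam = distr (distr (nu (lam^k) \<Otimes>\<^sub>M nu (lam^k)) borel (\<lambda>(a, b). a + lam * b)
                   \<Otimes>\<^sub>M distr coin_space borel (\<lambda>\<omega>. \<Sum>n. if n \<in> {n. 2 \<le> n mod k} then sgnb (\<omega> n) * lam ^ n else 0))
                 borel (\<lambda>(a, r). a + r)"
proof -
  interpret prob_space coin_space by (rule coin_prob)
  define \<mu> where "\<mu> = lam ^ k"
  define I0 where "I0 = {n::nat. n mod k = 0}"
  define I1 where "I1 = {n::nat. n mod k = 1}"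
  define IA where "IA = {n::nat. n mod k < 2}"
  define I2 where "I2 = {n::nat. 2 \<le> n mod k}"
  define X0 where "X0 \<omega> = sign_series \<mu> (\<lambda>m. \<omega> (k*m))" for \<omega> :: "nat \<Rightarrow> bool"
  define X1 where "X1 \<omega> = sign_series \<mu> (\<lambda>m. \<omega> (k*m+1))" for \<omega> :: "nat \<Rightarrow> bool"
  define R where "R \<omega> = (\<Sum>n. if n \<in> I2 then sgnb (\<omega> n) * lam ^ n else 0)" for \<omega> :: "nat \<Rightarrow> bool"
  have k0: "k > 0" using k by simp
  have m0: "k*m \<in> I0" "k*m \<in> IA" for m using k0 by (auto simp: I0_def IA_def)
  have m1: "k*m+1 \<in> I1" "k*m+1 \<in> IA" for m using k by (auto simp: I1_def IA_def mod_Suc)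
  have m1s: "Suc (k*m) \<in> I1" "Suc (k*m) \<in> IA" for m using m1[of m] by simp_all
  have inj0: "inj (\<lambda>m::nat. k*m)" using k0 by (auto simp: inj_on_def)
  have inj1: "inj (\<lambda>m::nat. k*m+1)" using k0 by (auto simp: inj_on_def)
  have indA: "indep_var (PiM IA (\<lambda>_. BB)) (\<lambda>\<omega>. restrict (\<lambda>i. \<omega> i) IA) (PiM I2 (\<lambda>_. BB)) (\<lambda>\<omega>. restrict (\<lambda>i. \<omega> i) I2)"
    by (rule indep_var_restrict[OF coin_indep]) (auto simp: IA_def I2_def)
  define FA where "FA r = sign_series \<mu> (\<lambda>m. r (k*m)) + lam * sign_series \<mu> (\<lambda>m. r (k*m+1))" for r :: "nat \<Rightarrow> bool"
  define FB where "FB r = (\<Sum>n. if n \<in> I2 then sgnb (r n) * lam ^ n else 0)" for r :: "nat \<Rightarrow> bool"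
  have FAm: "FA \<in> borel_measurable (PiM IA (\<lambda>_. BB))"
  proof -
    have "(\<lambda>r. sign_series \<mu> (\<lambda>m. r (k*m))) \<in> borel_measurable (PiM IA (\<lambda>_. BB))"
      by (rule series_meas) (rule m0)
    moreover have "(\<lambda>r. sign_series \<mu> (\<lambda>m. r (k*m+1))) \<in> borel_measurable (PiM IA (\<lambda>_. BB))"
      by (rule series_meas) (rule m1)
    ultimately show ?thesis unfolding FA_def[abs_def] by measurable
  qed
  have FBm: "FB \<in> borel_measurable (PiM I2 (\<lambda>_. BB))"
    unfolding FB_def[abs_def] by (rule rest_meas)
  have indYR: "indep_var borel (\<lambda>\<omega>. X0 \<omega> + lam * X1 \<omega>) borel R"
  proof -
    have "indep_var borel (FA \<circ> (\<lambda>\<omega>. restrict (\<lambda>i. \<omega> i) IA)) borel (FB \<circ> (\<lambda>\<omega>. restrict (\<lambda>i. \<omega> i) I2))"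
      by (rule indep_var_compose[OF indA FAm FBm])
    moreover have "FA \<circ> (\<lambda>\<omega>. restrict (\<lambda>i. \<omega> i) IA) = (\<lambda>\<omega>. X0 \<omega> + lam * X1 \<omega>)"
      by (auto simp: fun_eq_iff FA_def X0_def X1_def m0 m1 m1s)
    moreover have "FB \<circ> (\<lambda>\<omega>. restrict (\<lambda>i. \<omega> i) I2) = R"
      by (auto simp: fun_eq_iff FB_def R_def intro!: suminf_cong)
    ultimately show ?thesis by simp
  qed
  have ind01: "indep_var (PiM I0 (\<lambda>_. BB)) (\<lambda>\<omega>. restrict (\<lambda>i. \<omega> i) I0) (PiM I1 (\<lambda>_. BB)) (\<lambda>\<omega>. restrict (\<lambda>i. \<omega> i) I1)"
    by (rule indep_var_restrict[OF coin_indep]) (auto simp: I0_def I1_def)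
  have ind01': "indep_var borel X0 borel (\<lambda>\<omega>. lam * X1 \<omega>)"
  proof -
    define G0 where "G0 r = sign_series \<mu> (\<lambda>m. r (k*m))" for r :: "nat \<Rightarrow> bool"
    define G1 where "G1 r = lam * sign_series \<mu> (\<lambda>m. r (k*m+1))" for r :: "nat \<Rightarrow> bool"
    have G0m: "G0 \<in> borel_measurable (PiM I0 (\<lambda>_. BB))"
      unfolding G0_def[abs_def] by (rule series_meas) (rule m0)
    have G1m: "G1 \<in> borel_measurable (PiM I1 (\<lambda>_. BB))"
    proof -
      have "(\<lambda>r. sign_series \<mu> (\<lambda>m. r (k*m+1))) \<in> borel_measurable (PiM I1 (\<lambda>_. BB))"
        by (rule series_meas) (rule m1)
      then show ?thesis unfolding G1_def[abs_def] by measurable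
    qed
    have "indep_var borel (G0 \<circ> (\<lambda>\<omega>. restrict (\<lambda>i. \<omega> i) I0)) borel (G1 \<circ> (\<lambda>\<omega>. restrict (\<lambda>i. \<omega> i) I1))"
      by (rule indep_var_compose[OF ind01 G0m G1m])
    moreover have "G0 \<circ> (\<lambda>\<omega>. restrict (\<lambda>i. \<omega> i) I0) = X0"
      by (auto simp: fun_eq_iff G0_def X0_def m0)
    moreover have "G1 \<circ> (\<lambda>\<omega>. restrict (\<lambda>i. \<omega> i) I1) = (\<lambda>\<omega>. lam * X1 \<omega>)"
      by (auto simp: fun_eq_iff G1_def X1_def m1 m1s)
    ultimately show ?thesis by simp
  qed
  have lawX0: "distr coin_space borel X0 = nu \<mu>"
    unfolding X0_def[abs_def] by (rule law_shift[OF inj0])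
  have lawX1: "distr coin_space borel (\<lambda>\<omega>. lam * X1 \<omega>) = distr (nu \<mu>) borel (\<lambda>b. lam * b)"
  proof -
    have "distr coin_space borel (\<lambda>\<omega>. lam * X1 \<omega>) = distr (distr coin_space borel X1) borel (\<lambda>b. lam * b)"
      by (subst distr_distr) (auto simp: comp_def X1_def[abs_def] intro!: measurable_compose[OF shift_meas sign_series_meas_coin])
    also have "distr coin_space borel X1 = nu \<mu>"
      unfolding X1_def[abs_def] by (rule law_shift[OF inj1])
    finally show ?thesis .
  qed
  have "nu lam = distr coin_space borel (\<lambda>\<omega>. (X0 \<omega> + lam * X1 \<omega>) + R \<omega>)"
  proof -
    have "sign_series lam = (\<lambda>\<omega>. (X0 \<omega> + lam * X1 \<omega>) + R \<omega>)"
      using series_split[OF lam k] by (auto simp: fun_eq_iff X0_def X1_def R_def I2_def \<mu>_def)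
    then show ?thesis by (simp add: nu_def)
  qed
  also have "\<dots> = distr (distr coin_space borel (\<lambda>\<omega>. X0 \<omega> + lam * X1 \<omega>) \<Otimes>\<^sub>M distr coin_space borel R) borel (\<lambda>(a, b). a + b)"
    by (rule distr_sum_indep[OF indYR])
  also have "distr coin_space borel (\<lambda>\<omega>. X0 \<omega> + lam * X1 \<omega>) = distr (nu \<mu> \<Otimes>\<^sub>M distr (nu \<mu>) borel (\<lambda>b. lam * b)) borel (\<lambda>(a, b). a + b)"
    using distr_sum_indep[OF ind01'] lawX0 lawX1 by simp
  also have "\<dots> = distr (nu \<mu> \<Otimes>\<^sub>M nu \<mu>) borel (\<lambda>(a, b). a + lam * b)"
  proof -
    have snu: "sets (nu \<mu>) = sets borel" by (simp add: nu_def)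
    have pnu: "prob_space (nu \<mu>)" unfolding nu_def by (rule prob_space_distr) simp
    have "sigma_finite_measure (distr (nu \<mu>) borel (\<lambda>b. lam * b))"
    proof -
      have "prob_space (distr (nu \<mu>) borel (\<lambda>b. lam * b))"
        by (rule prob_space.prob_space_distr[OF pnu]) (simp add: measurable_cong_sets[OF snu refl])
      then show ?thesis by (simp add: prob_space_imp_sigma_finite)
    qed
    then have "distr (nu \<mu>) borel (\<lambda>x. x) \<Otimes>\<^sub>M distr (nu \<mu>) borel (\<lambda>b. lam * b) = distr (nu \<mu> \<Otimes>\<^sub>M nu \<mu>) (borel \<Otimes>\<^sub>M borel) (\<lambda>(x, y). (x, lam * y))"
      by (intro pair_measure_distr) (auto simp: measurable_cong_sets[OF snu refl])
    moreover have "distr (nu \<mu>) borel (\<lambda>x. x) = nu \<mu>" by (rule distr_id2) (simp add: snu)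
    ultimately have eq: "nu \<mu> \<Otimes>\<^sub>M distr (nu \<mu>) borel (\<lambda>b. lam * b) = distr (nu \<mu> \<Otimes>\<^sub>M nu \<mu>) (borel \<Otimes>\<^sub>M borel) (\<lambda>(x, y). (x, lam * y))"
      by simp
    show ?thesis unfolding eq
      by (subst distr_distr) (auto simp: comp_def case_prod_beta' measurable_cong_sets[OF sets_pair_measure_cong[OF snu snu] refl])

  qed
  finally show ?thesis by (simp add: \<mu>_def R_def I2_def)
qed


lemma nu_zero_not_density:
  fixes g :: "complex \<Rightarrow> ennreal"
  assumes "nu 0 = density lborel g" and gm[measurable]: "g \<in> borel_measurable borel"
  shows False
proof -
  have ss: "sign_series 0 \<omega> = sgnb (\<omega> 0)" for \<omega>
  proof -
    have "(\<lambda>n. sgnb (\<omega> n) * 0 ^ n) = (\<lambda>n. if n = 0 then sgnb (\<omega> 0) else 0)"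
      by (auto simp: fun_eq_iff)
    then show ?thesis using sums_single[of 0 "\<lambda>_. sgnb (\<omega> 0)"] by (simp add: sign_series_sgnb sums_iff)
  qed
  have m0: "(\<lambda>\<omega>. \<omega> 0) \<in> coin_space \<rightarrow>\<^sub>M BB"
    unfolding coin_space_def by (rule measurable_component_singleton) simp
  have "emeasure (nu 0) {1} = emeasure coin_space (sign_series 0 -` {1} \<inter> space coin_space)"
    unfolding nu_def by (rule emeasure_distr) auto
  also have "sign_series 0 -` {1} \<inter> space coin_space = (\<lambda>\<omega>. \<omega> 0) -` {True} \<inter> space coin_space"
  proof (intro set_eqI)
    fix \<omega> :: "nat \<Rightarrow> bool"
    have "sign_series 0 \<omega> = 1 \<longleftrightarrow> \<omega> 0" by (cases "\<omega> 0") (simp_all add: ss sgnb_def)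
    then show "\<omega> \<in> sign_series 0 -` {1} \<inter> space coin_space \<longleftrightarrow> \<omega> \<in> (\<lambda>\<omega>. \<omega> 0) -` {True} \<inter> space coin_space"
      by (simp only: vimage_def Int_iff mem_Collect_eq singleton_iff eq_True)
  qed
  also have "emeasure coin_space \<dots> = emeasure (distr coin_space BB (\<lambda>\<omega>. \<omega> 0)) {True}"
    by (rule emeasure_distr[symmetric]) (use m0 in auto)
  also have "distr coin_space BB (\<lambda>\<omega>. \<omega> 0) = BB"
    unfolding coin_space_def by (rule distr_PiM_component) (auto intro: measure_pmf.prob_space_axioms)
  also have "emeasure BB {True} = ennreal (1/2)"
    by (simp add: emeasure_pmf_single)
  finally have h1: "emeasure (nu 0) {1} = ennreal (1/2)" .
  have "emeasure (density lborel g) {1} = (\<integral>\<^sup>+x. g x * indicator {1} x \<partial>lborel)"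
    by (rule emeasure_density) auto
  also have "\<dots> = (\<integral>\<^sup>+(x::complex). 0 \<partial>lborel)"
    by (rule nn_integral_cong_AE) (use AE_lborel_singleton[of 1] in \<open>auto elim!: eventually_mono\<close>)
  finally have "emeasure (density lborel g) {1} = 0" by simp
  with h1 assms show False by simp
qed


lemma p_bound:
  fixes f :: "complex \<Rightarrow> real" and c :: complex
  assumes fm[measurable]: "f \<in> borel_measurable borel" and f0: "\<And>x. f x \<ge> 0"
    and f1: "integrable lborel f" and f2: "integrable lborel (\<lambda>x. (f x)^2)" and c0: "c \<noteq> 0"
  shows "0 \<le> (LINT s|lborel. f (w - c * s) * f s)"
    and "(LINT s|lborel. f (w - c * s) * f s) \<le> (1/(cmod c)^2) * (LINT x|lborel. (f x)^2) + (LINT x|lborel. (f x)^2)"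
proof -
  show "0 \<le> (LINT s|lborel. f (w - c * s) * f s)"
    by (rule integral_nonneg_AE) (use f0 in auto)
  define K where "K = 1/(cmod c)^2"
  define Q where "Q = (LINT x|lborel. (f x)^2)"
  have K0: "K \<ge> 0" by (simp add: K_def)
  have Q0: "Q \<ge> 0" unfolding Q_def by (rule integral_nonneg_AE) auto
  have "ennreal (LINT s|lborel. f (w - c * s) * f s) = (\<integral>\<^sup>+s. ennreal (f (w - c * s) * f s) \<partial>lborel)"
    by (rule nn_integral_eq_integral[symmetric]) (use int_prod[OF fm f0 f1 f2 c0] f0 in auto)
  also have "\<dots> \<le> (\<integral>\<^sup>+s. ennreal ((f (w - c * s))^2) + ennreal ((f s)^2) \<partial>lborel)"
  proof (rule nn_integral_mono)
    fix s
    have "0 \<le> (f (w - c * s) - f s)^2" by simp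
    then have "2 * (f (w - c * s) * f s) \<le> (f (w - c * s))^2 + (f s)^2"
      by (simp add: power2_eq_square algebra_simps)
    moreover have "0 \<le> f (w - c * s) * f s" using f0 by simp
    ultimately have "f (w - c * s) * f s \<le> (f (w - c * s))^2 + (f s)^2" by linarith
    then show "ennreal (f (w - c * s) * f s) \<le> ennreal ((f (w - c * s))^2) + ennreal ((f s)^2)"
      by (simp add: ennreal_plus[symmetric] del: ennreal_plus)
  qed
  also have "\<dots> = (\<integral>\<^sup>+s. ennreal ((f (w - c * s))^2) \<partial>lborel) + (\<integral>\<^sup>+s. ennreal ((f s)^2) \<partial>lborel)"
    by (rule nn_integral_add) measurable
  also have "\<dots> = ennreal K * ennreal Q + ennreal Q"
    unfolding K_def Q_def nn_sq_shift[OF fm f0 f1 f2 c0]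
    by (simp add: nn_integral_eq_integral[OF f2])
  also have "\<dots> = ennreal (K * Q + Q)" using K0 Q0 by (simp add: ennreal_mult)
  finally have h: "ennreal (LINT s|lborel. f (w - c * s) * f s) \<le> ennreal (K * Q + Q)" .
  have "K * Q + Q \<ge> 0" using K0 Q0 by simp
  with h have "(LINT s|lborel. f (w - c * s) * f s) \<le> K * Q + Q" using ennreal_le_iff by blast
  then show "(LINT s|lborel. f (w - c * s) * f s) \<le> (1/(cmod c)^2) * (LINT x|lborel. (f x)^2) + (LINT x|lborel. (f x)^2)"
    by (simp add: K_def Q_def)
qed

lemma conv_measure_cont:
  fixes p :: "complex \<Rightarrow> real" and R :: "complex measure"
  assumes pc: "continuous_on UNIV p" and pb: "\<And>x. \<bar>p x\<bar> \<le> Bd"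
    and pr: "prob_space R" and sR: "sets R = sets borel"
  shows "continuous_on UNIV (\<lambda>x. LINT r|R. p (x - r))"
    and "integrable R (\<lambda>r. p (x - r))"
proof -
  interpret prob_space R by (rule pr)
  have pm[measurable]: "p \<in> borel_measurable borel" by (rule borel_measurable_continuous_onI[OF pc])
  have mR: "(\<lambda>r. p (y - r)) \<in> borel_measurable R" for y
    by (simp add: measurable_cong_sets[OF sR refl])
  show "integrable R (\<lambda>r. p (x - r))"
    by (rule integrable_const_bound[where B=Bd]) (use pb mR in auto)
  show "continuous_on UNIV (\<lambda>x. LINT r|R. p (x - r))"
  proof (rule continuous_at_imp_continuous_on, intro ballI)
    fix x :: complex
    show "isCont (\<lambda>x. LINT r|R. p (x - r)) x"
      unfolding continuous_at_sequentially comp_def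
    proof (intro allI impI)
      fix u :: "nat \<Rightarrow> complex" assume u: "u \<longlonglongrightarrow> x"
      show "(\<lambda>n. LINT r|R. p (u n - r)) \<longlonglongrightarrow> (LINT r|R. p (x - r))"
      proof (rule Bochner_Integration.integral_dominated_convergence[where w="\<lambda>_. Bd"])
        show "AE r in R. (\<lambda>n. p (u n - r)) \<longlonglongrightarrow> p (x - r)"
        proof (rule AE_I2)
          fix r
          have "isCont p (x - r)" using pc by (simp add: continuous_on_eq_continuous_at)
          moreover have "(\<lambda>n. u n - r) \<longlonglongrightarrow> x - r" using u by (intro tendsto_intros)
          ultimately show "(\<lambda>n. p (u n - r)) \<longlonglongrightarrow> p (x - r)" by (rule isCont_tendsto_compose)
        qed
        show "AE r in R. norm (p (u n - r)) \<le> Bd" for n using pb by simp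
      qed (use mR in auto)
    qed
  qed
qed


theorem mainTheorem18:
  fixes lam :: complex and k :: nat
  assumes "norm lam < 1" and "k \<ge> 2"
    and "\<exists>f :: complex \<Rightarrow> real. f \<in> borel_measurable borel \<and> (\<forall>x. 0 \<le> f x)
          \<and> nu (lam ^ k) = density lborel (\<lambda>x. ennreal (f x))
          \<and> integrable lborel (\<lambda>x. (f x)\<^sup>2)"
  shows "\<exists>g :: complex \<Rightarrow> real. continuous_on UNIV g \<and> (\<forall>x. 0 \<le> g x)
          \<and> nu lam = density lborel (\<lambda>x. ennreal (g x))"
proof -
  obtain f :: "complex \<Rightarrow> real" where fm[measurable]: "f \<in> borel_measurable borel" and f0a: "\<forall>x. 0 \<le> f x"
    and fd: "nu (lam ^ k) = density lborel (\<lambda>x. ennreal (f x))" and f2: "integrable lborel (\<lambda>x. (f x)\<^sup>2)"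
    using assms(3) by blast
  have f0: "\<And>x. 0 \<le> f x" using f0a by blast
  have k0: "k > 0" using assms(2) by simp
  have pnu: "prob_space (nu \<mu>)" for \<mu>
    unfolding nu_def by (rule prob_space.prob_space_distr[OF coin_prob]) simp
  have snu: "sets (nu \<mu>) = sets borel" for \<mu> by (simp add: nu_def)
  have lam0: "lam \<noteq> 0"
  proof
    assume "lam = 0"
    then have "nu 0 = density lborel (\<lambda>x. ennreal (f x))" using fd k0 by (simp add: zero_power)
    then show False by (rule nu_zero_not_density) measurable
  qed
  have f1: "integrable lborel f"
  proof -
    have "(\<integral>\<^sup>+x. ennreal (f x) \<partial>lborel) = emeasure (density lborel (\<lambda>x. ennreal (f x))) UNIV"
      by (simp add: emeasure_density)
    also have "\<dots> = emeasure (nu (lam ^ k)) (space (nu (lam ^ k)))"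
      by (simp add: fd)
    also have "\<dots> = 1" by (rule prob_space.emeasure_space_1[OF pnu])
    finally have "(\<integral>\<^sup>+x. ennreal (norm (f x)) \<partial>lborel) < \<infinity>" using f0 by simp
    then show ?thesis unfolding integrable_iff_bounded by simp
  qed
  define D where "D = density lborel (\<lambda>x. ennreal (f x))"
  define p where "p w = (LINT s|lborel. f (w - lam * s) * f s)" for w
  define Bd where "Bd = (1/(cmod lam)^2) * (LINT x|lborel. (f x)^2) + (LINT x|lborel. (f x)^2)"
  have pc: "continuous_on UNIV p"
    using conv_cont[OF fm f0 f1 f2 lam0] by (simp add: p_def[abs_def])
  have p0: "p w \<ge> 0" for w using p_bound(1)[OF fm f0 f1 f2 lam0] by (simp add: p_def)
  have pb: "\<bar>p w\<bar> \<le> Bd" for w using p_bound[OF fm f0 f1 f2 lam0, of w] by (simp add: p_def Bd_def)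
  have pm[measurable]: "p \<in> borel_measurable borel" by (rule borel_measurable_continuous_onI[OF pc])
  have step1: "distr (nu (lam^k) \<Otimes>\<^sub>M nu (lam^k)) borel (\<lambda>(a, b). a + lam * b) = density lborel (\<lambda>x. ennreal (p x))"
  proof -
    have sD: "sets D = sets borel" by (simp add: D_def)
    have sfD: "sigma_finite_measure D"
      using pnu[of "lam^k"] fd by (simp add: D_def prob_space_imp_sigma_finite)
    have "distr (D \<Otimes>\<^sub>M D) borel (\<lambda>(a, b). a + lam * b) = density lborel (\<lambda>x. \<integral>\<^sup>+r. ennreal (f (x - lam * r)) \<partial>D)"
      unfolding D_def[symmetric]
      by (subst (1) D_def, rule distr_add_density) (auto simp: measurable_cong_sets[OF sD refl] sfD)
    also have "(\<lambda>x. \<integral>\<^sup>+r. ennreal (f (x - lam * r)) \<partial>D) = (\<lambda>x. ennreal (p x))"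
    proof
      fix x
      have "(\<integral>\<^sup>+r. ennreal (f (x - lam * r)) \<partial>D) = (\<integral>\<^sup>+r. ennreal (f r) * ennreal (f (x - lam * r)) \<partial>lborel)"
        unfolding D_def by (rule nn_integral_density) measurable
      also have "\<dots> = (\<integral>\<^sup>+r. ennreal (f (x - lam * r) * f r) \<partial>lborel)"
        using f0 by (simp add: ennreal_mult mult.commute)
      also have "\<dots> = ennreal (p x)"
        unfolding p_def by (rule nn_integral_eq_integral[OF int_prod[OF fm f0 f1 f2 lam0]]) (use f0 in auto)
      finally show "(\<integral>\<^sup>+r. ennreal (f (x - lam * r)) \<partial>D) = ennreal (p x)" .
    qed
    finally show ?thesis by (simp add: fd D_def)
  qed
  define Rl where "Rl = distr coin_space borel (\<lambda>\<omega>. \<Sum>n. if n \<in> {n. 2 \<le> n mod k} then sgnb (\<omega> n) * lam ^ n else 0)"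
  have pRl: "prob_space Rl"
  proof -
    have "(\<lambda>\<omega>. \<Sum>n. if n \<in> {n. 2 \<le> n mod k} then sgnb (\<omega> n) * lam ^ n else 0) \<in> borel_measurable coin_space"
      unfolding coin_space_def
    proof (rule borel_measurable_suminf)
      fix n
      show "(\<lambda>\<omega>. if n \<in> {n. 2 \<le> n mod k} then sgnb (\<omega> n) * lam ^ n else 0) \<in> borel_measurable (PiM UNIV (\<lambda>_. BB))"
        using term_meas[of n UNIV "lam ^ n"] by (cases "n \<in> {n. 2 \<le> n mod k}") auto
    qed
    then show ?thesis unfolding Rl_def by (rule prob_space.prob_space_distr[OF coin_prob])
  qed
  have sRl: "sets Rl = sets borel" by (simp add: Rl_def)
  define q where "q x = (LINT r|Rl. p (x - r))" for x
  have "nu lam = distr (density lborel (\<lambda>x. ennreal (p x)) \<Otimes>\<^sub>M Rl) borel (\<lambda>(a, r). a + r)"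
    using law_decomp[OF assms(1,2)] step1 by (simp add: Rl_def)
  also have "\<dots> = density lborel (\<lambda>x. \<integral>\<^sup>+r. ennreal (p (x - r)) \<partial>Rl)"
    using distr_add_density[of "\<lambda>x. ennreal (p x)" "\<lambda>r. r" Rl] pRl
    by (simp add: measurable_cong_sets[OF sRl refl] prob_space_imp_sigma_finite)
  also have "(\<lambda>x. \<integral>\<^sup>+r. ennreal (p (x - r)) \<partial>Rl) = (\<lambda>x. ennreal (q x))"
  proof
    fix x
    show "(\<integral>\<^sup>+r. ennreal (p (x - r)) \<partial>Rl) = ennreal (q x)"
      unfolding q_def by (rule nn_integral_eq_integral[OF conv_measure_cont(2)[OF pc pb pRl sRl]]) (use p0 in auto)
  qed
  finally have eq: "nu lam = density lborel (\<lambda>x. ennreal (q x))" .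
  have qc: "continuous_on UNIV q"
    using conv_measure_cont(1)[OF pc pb pRl sRl] by (simp add: q_def[abs_def])
  have q0: "\<forall>x. 0 \<le> q x"
    unfolding q_def by (intro allI integral_nonneg_AE) (use p0 in auto)
  show ?thesis using qc q0 eq by blast
qed


end
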